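(* Let $p$ be a prime and $N$ an integer with $p^2>N\ge1$. The linear complexity $L_p(N)$ of the sequence $q_p(u)$, $u=0,\ldots,N-1$ (viewed as elements of $\mathbb{F}_p$), satisfies $$L_p(N)\ge\frac12\min\{p-1,\,N-p-1\}.$$
   Context: For a prime $p$ and an integer $u$ with $\gcd(u,p)=1$, the Fermat quotient $q_p(u)$ is the unique integer with $q_p(u)\equiv (u^{p-1}-1)/p \pmod p$ and $0\le q_p(u)\le p-1$; also $q_p(kp)=0$ for all $k\in\mathbb{Z}$. The linear complexity of an $N$-element sequence $s_0,\ldots,s_{N-1}$ in a ring $\mathcal{R}$ is the smallest $L$ such that $s_{u+L}=c_{L-1}s_{u+L-1}+\cdots+c_0s_u$ for all $0\le u\le N-L-1$, for some $c_0,\ldots,c_{L-1}\in\mathcal{R}$. *)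

theory Defs
  imports "HOL-Number_Theory.Number_Theory"
begin

definition fermat_quotient :: "nat \<Rightarrow> int \<Rightarrow> int" where
  "fermat_quotient p u =
     (if int p dvd u then 0
      else ((u ^ (p - 1) - 1) div int p) mod int p)"

definition lin_rec_mod :: "int \<Rightarrow> (nat \<Rightarrow> int) \<Rightarrow> nat \<Rightarrow> nat \<Rightarrow> bool" where
  "lin_rec_mod m s N L \<longleftrightarrow>
     (\<exists>c :: nat \<Rightarrow> int. \<forall>u. u + L + 1 \<le> N \<longrightarrow>
        [s (u + L) = (\<Sum>j<L. c j * s (u + j))] (mod m))"

definition linear_complexity_mod :: "int \<Rightarrow> (nat \<Rightarrow> int) \<Rightarrow> nat \<Rightarrow> nat" where
  "linear_complexity_mod m s N = (LEAST L. lin_rec_mod m s N L)"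

end

theory Submission imports Defs "HOL-Computational_Algebra.Polynomial" begin
lemma poly_roots_mod:
  fixes h :: "int poly" and p :: int
  assumes "prime p" "S \<subseteq> {0..<p}" "finite S" "degree h < card S" "\<forall>x\<in>S. p dvd poly h x"
  shows "p dvd poly h y"
  using assms(2-5)
proof (induction "degree h" arbitrary: h S y rule: less_induct)
  case (less h S)
  from less.prems have "S \<noteq> {}" by auto
  then obtain x0 where x0: "x0 \<in> S" by auto
  define q where "q = synthetic_div h x0"
  have hq: "poly h y = (y - x0) * poly q y + poly h x0" for y
  proof -
    have "poly h y = poly ([:-x0, 1:] * q + [:poly h x0:]) y"
      unfolding q_def synthetic_div_correct' ..
    also have "\<dots> = (y - x0) * poly q y + poly h x0" by (simp add: algebra_simps)
    finally show ?thesis .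
  qed
  have h0: "p dvd poly h x0" using less.prems x0 by auto
  show ?case
  proof (cases "degree h = 0")
    case True
    then obtain c where "h = [:c:]" by (metis degree_eq_zeroE)
    then show ?thesis using h0 by simp
  next
    case False
    have dq: "degree q < degree h" using False by (simp add: q_def degree_synthetic_div)
    have "p dvd poly q y" for y
    proof (rule less.hyps[OF dq, where S="S - {x0}"])
      show "S - {x0} \<subseteq> {0..<p}" "finite (S - {x0})" using less.prems by auto
      show "degree q < card (S - {x0})" using less.prems x0 False
        by (simp add: q_def degree_synthetic_div)
      show "\<forall>x\<in>S - {x0}. p dvd poly q x"
      proof
        fix x assume x: "x \<in> S - {x0}"
        have hx: "p dvd poly h x" using less.prems x by auto
        have "(x - x0) * poly q x = poly h x - poly h x0" using hq[of x] by simp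
        then have "p dvd (x - x0) * poly q x" using dvd_diff[OF hx h0] by simp
        moreover have "\<not> p dvd (x - x0)"
        proof
          assume dv: "p dvd x - x0"
          have "x \<in> {0..<p}" "x0 \<in> {0..<p}" using x x0 less.prems by auto
          moreover have "x - x0 \<noteq> 0" using x by auto
          ultimately show False using dvd_imp_le_int[OF _ dv] by auto
        qed
        ultimately show "p dvd poly q x" using assms(1) prime_dvd_mult_iff by blast
      qed
    qed
    then show ?thesis using hq[of y] h0 by simp
  qed
qed

lemma binom_step:
  fixes v p :: int
  shows "\<exists>K. (v + p) ^ Suc n = v ^ Suc n + int (Suc n) * p * v ^ n + p^2 * K"
proof (induction n)
  case 0 then show ?case by (intro exI[of _ 0]) simp
next
  case (Suc n)
  then obtain K where K: "(v + p) ^ Suc n = v ^ Suc n + int (Suc n) * p * v ^ n + p^2 * K" by blast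
  have "(v + p) ^ Suc (Suc n) = (v+p) * (v ^ Suc n + int (Suc n) * p * v ^ n + p^2 * K)"
    using K by simp
  also have "\<dots> = v ^ Suc (Suc n) + int (Suc (Suc n)) * p * v ^ Suc n + p^2 * (v*K + int (Suc n) * v^n + p * K)"
    by (simp add: algebra_simps power2_eq_square)
  finally show ?case by blast
qed

lemma fq_shift:
  fixes p v :: nat
  assumes p: "prime p" and v: "\<not> p dvd v"
  shows "int p dvd (fermat_quotient p (int v + int p) - fermat_quotient p (int v)) * int v + 1"
proof -
  have p2: "p \<ge> 2" using p prime_ge_2_nat by blast
  define m where "m = p - 2"
  have m: "p - 1 = Suc m" using p2 unfolding m_def by simp
  have "[v ^ (p - 1) = 1] (mod p)" using fermat_theorem[OF p v] .
  hence "[int v ^ (p - 1) = 1] (mod int p)" by (metis cong_int_iff of_nat_1 of_nat_power)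
  hence "int p dvd int v ^ (p - 1) - 1" by (simp add: cong_iff_dvd_diff)
  then obtain Q where Q: "int v ^ (p - 1) - 1 = int p * Q" by blast
  obtain K where K: "(int v + int p) ^ Suc m = int v ^ Suc m + int (Suc m) * int p * int v ^ m + (int p)^2 * K"
    using binom_step by blast
  define Q' where "Q' = Q + int (Suc m) * int v ^ m + int p * K"
  have Q': "(int v + int p) ^ (p - 1) - 1 = int p * Q'"
  proof -
    have "(int v + int p) ^ (p - 1) - 1 = (int v ^ (p - 1) - 1) + int p * (int (Suc m) * int v ^ m + int p * K)"
      unfolding m K by (simp add: power2_eq_square ring_distribs)
    also have "\<dots> = int p * Q'" unfolding Q Q'_def by (simp add: ring_distribs)
    finally show ?thesis .
  qed
  have nv: "\<not> int p dvd int v" using v by simp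
  have nvp: "\<not> int p dvd int v + int p" using nv by (simp add: dvd_add_left_iff)
  have pp: "int p > 0" using p2 by simp
  have f1: "fermat_quotient p (int v) = Q mod int p"
    using nv Q pp by (simp add: fermat_quotient_def)
  have f2: "fermat_quotient p (int v + int p) = Q' mod int p"
    using nvp Q' pp by (simp add: fermat_quotient_def)
  have sm: "int (Suc m) = int p - 1" using m p2 by linarith
  define A where "A = Q' div int p"
  define B where "B = Q div int p"
  define W where "W = int v ^ m"
  have e1: "Q' mod int p = Q' - int p * A" unfolding A_def by (simp add: minus_div_mult_eq_mod[symmetric] mult.commute)
  have e2: "Q mod int p = Q - int p * B" unfolding B_def by (simp add: minus_div_mult_eq_mod[symmetric] mult.commute)
  have vv: "int v ^ (p - 1) = int v * W" unfolding m W_def by simp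
  have "(Q' mod int p - Q mod int p) * int v + 1
     = int p * (int v * W - Q + K * int v - (A - B) * int v)"
  proof -
    have QQ: "Q' - Q = (int p - 1) * W + int p * K" unfolding Q'_def sm W_def by simp
    have "(Q' mod int p - Q mod int p) * int v + 1 = (Q' - Q) * int v + 1
          - int p * (A - B) * int v"
      unfolding e1 e2 by (simp add: ring_distribs)
    also have "\<dots> = ((int p - 1) * W + int p * K) * int v + 1
          - int p * (A - B) * int v" unfolding QQ ..
    also have "\<dots> = int p * (int v * W) - int v ^ (p - 1) + 1 + int p * K * int v - int p * (A - B) * int v"
      unfolding vv by (simp add: ring_distribs mult.commute mult.left_commute)
    also have "\<dots> = int p * (int v * W - Q + K * int v - (A - B) * int v)"
      using Q by (simp add: ring_distribs mult.commute mult.left_commute)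
    finally show ?thesis .
  qed
  then show ?thesis unfolding f1 f2 by simp
qed
theorem theorem13:
  fixes p N :: nat
  assumes "prime p" and "1 \<le> N" and "N < p ^ 2"
  shows "2 * real (linear_complexity_mod (int p) (\<lambda>u. fermat_quotient p (int u)) N)
           \<ge> min (real p - 1) (real N - real p - 1)"
proof (rule ccontr)
  define s where "s = (\<lambda>u::nat. fermat_quotient p (int u))"
  define L where "L = linear_complexity_mod (int p) s N"
  assume "\<not> ?thesis"
  hence A: "2 * real L < real p - 1" "2 * real L < real N - real p - 1"
    unfolding L_def s_def by auto
  have L1: "2 * L + 2 \<le> p" using A(1) by linarith
  have L2: "2 * L + 2 + p \<le> N" using A(2) by linarith
  have pr: "prime p" by fact
  have ip: "prime (int p)" using pr by simp
  have "lin_rec_mod (int p) s N N" unfolding lin_rec_mod_def by auto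
  hence "lin_rec_mod (int p) s N L" unfolding L_def linear_complexity_mod_def by (rule LeastI)
  then obtain c where c: "\<And>u. u + L + 1 \<le> N \<Longrightarrow> [s (u + L) = (\<Sum>j<L. c j * s (u + j))] (mod int p)"
    unfolding lin_rec_mod_def by blast
  define t where "t = (\<lambda>u. s (u + p) - s u)"
  have trec: "int p dvd t (u + L) - (\<Sum>j<L. c j * t (u + j))" if "u + p + L + 1 \<le> N" for u
  proof -
    have 1: "int p dvd s (u + L) - (\<Sum>j<L. c j * s (u + j))" using c[of u] that
      by (simp add: cong_iff_dvd_diff)
    have 2: "int p dvd s (u + p + L) - (\<Sum>j<L. c j * s (u + p + j))" using c[of "u+p"] that
      by (simp add: cong_iff_dvd_diff)
    have a: "\<And>j. u + j + p = u + p + j" by simp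
    have b: "(\<Sum>j<L. c j * t (u + j)) = (\<Sum>j<L. c j * s (u + p + j)) - (\<Sum>j<L. c j * s (u + j))"
      unfolding t_def a by (simp add: right_diff_distrib sum_subtractf)
    have "t (u + L) = s (u + p + L) - s (u + L)" unfolding t_def a by simp
    with b have eq: "t (u + L) - (\<Sum>j<L. c j * t (u + j)) =
      (s (u + p + L) - (\<Sum>j<L. c j * s (u + p + j))) - (s (u + L) - (\<Sum>j<L. c j * s (u + j)))"
      by simp
    show ?thesis unfolding eq by (rule dvd_diff[OF 2 1])
  qed
  have tgood: "int p dvd t v * int v + 1" if "1 \<le> v" "v < p" for v
  proof -
    have "\<not> p dvd v" using that by (auto dest: dvd_imp_le)
    from fq_shift[OF pr this] show ?thesis unfolding t_def s_def by simp
  qed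
  define H :: "int poly" where "H = (\<Prod>j<L. [:int j, 1:]) -
      (\<Sum>j<L. smult (c j) (\<Prod>i\<in>{0..L}-{j}. [:int i, 1:]))"
  have degH: "degree H \<le> L"
    unfolding H_def
  proof (rule degree_diff_le)
    have "degree (\<Prod>j<L. [:int j, 1:]) \<le> (\<Sum>j<L. degree [:int j, 1:])"
      using degree_prod_sum_le[of "{..<L}" "\<lambda>j. [:int j, 1:]"] by (simp add: o_def)
    then show "degree (\<Prod>j<L. [:int j, 1:]) \<le> L" by simp
    show "degree (\<Sum>j<L. smult (c j) (\<Prod>i\<in>{0..L}-{j}. [:int i, 1:])) \<le> L"
    proof (rule degree_sum_le)
      fix j assume j: "j \<in> {..<L}"
      have "degree (smult (c j) (\<Prod>i\<in>{0..L}-{j}. [:int i, 1:])) \<le> degree (\<Prod>i\<in>{0..L}-{j}. [:int i, 1:])"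
        by simp
      also have "\<dots> \<le> (\<Sum>i\<in>{0..L}-{j}. degree [:int i, 1:])"
        using degree_prod_sum_le[of "{0..L}-{j}" "\<lambda>i. [:int i, 1:]"] by (simp add: o_def)
      also have "\<dots> = L" using j by simp
      finally show "degree (smult (c j) (\<Prod>i\<in>{0..L}-{j}. [:int i, 1:])) \<le> L" .
    qed simp
  qed
  define P where "P = (\<lambda>x::int. \<lambda>j. \<Prod>i\<in>{0..L}-{j}. int i + x)"
  have polyH: "poly H x = P x L - (\<Sum>j<L. c j * P x j)" for x
  proof -
    have "{0..L} - {L} = {..<L}" by auto
    then show ?thesis unfolding H_def P_def by (simp add: poly_prod poly_sum)
  qed
  have roots: "int p dvd poly H (int u)" if u: "1 \<le> u" "u \<le> L + 1" for u
  proof -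
    define x where "x = int u"
    define Pi where "Pi = (\<Prod>i\<in>{0..L}. int i + x)"
    have Pj: "Pi = (int j + x) * P x j" if "j \<le> L" for j
      unfolding Pi_def P_def using that by (subst prod.remove[of _ j]) auto
    have d: "int p dvd t (u + j) * Pi + P x j" if "j \<le> L" for j
    proof -
      have "t (u + j) * Pi + P x j = (t (u + j) * int (u + j) + 1) * P x j"
      proof -
        have "Pi = int (u + j) * P x j" using Pj[OF that] unfolding x_def by simp
        then show ?thesis by (simp add: distrib_right mult.assoc)
      qed
      moreover have "int p dvd t (u + j) * int (u + j) + 1"
        using tgood[of "u+j"] that u L1 by simp
      ultimately show ?thesis by simp
    qed
    have r: "int p dvd (t (u + L) - (\<Sum>j<L. c j * t (u + j))) * Pi"
      using trec[of u] u L2 by simp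
    have sd: "(\<Sum>j<L. c j * (t (u + j) * Pi + P x j)) = (\<Sum>j<L. c j * t (u + j)) * Pi + (\<Sum>j<L. c j * P x j)"
      by (simp add: sum.distrib sum_distrib_right distrib_left mult.assoc)
    have e: "- poly H x = (t (u + L) - (\<Sum>j<L. c j * t (u + j))) * Pi
         - (t (u + L) * Pi + P x L) + (\<Sum>j<L. c j * (t (u + j) * Pi + P x j))"
      unfolding polyH sd by (simp add: left_diff_distrib)
    have "int p dvd (\<Sum>j<L. c j * (t (u + j) * Pi + P x j))"
      by (rule dvd_sum) (use d in simp)
    then have "int p dvd - poly H x" unfolding e
      by (rule dvd_add[OF dvd_diff[OF r d[OF order_refl]]])
    then show ?thesis unfolding x_def by simp
  qed
  have "int p dvd poly H (- int L)"
  proof (rule poly_roots_mod[OF ip, of "int ` {1..L+1}"])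
    show "int ` {1..L+1} \<subseteq> {0..<int p}" using L1 by auto
    show "finite (int ` {1..L+1})" by simp
    show "degree H < card (int ` {1..L+1})" using degH by (simp add: card_image)
    show "\<forall>x\<in>int ` {1..L+1}. int p dvd poly H x" using roots by auto
  qed
  moreover have "poly H (- int L) = (\<Prod>j<L. int j - int L)"
  proof -
    have "P (- int L) j = 0" if "j < L" for j
      unfolding P_def by (rule prod_zero) (use that in \<open>auto intro!: bexI[of _ L]\<close>)
    moreover have "P (- int L) L = (\<Prod>j<L. int j - int L)"
    proof -
      have "{0..L} - {L} = {..<L}" by auto
      then show ?thesis unfolding P_def by simp
    qed
    ultimately show ?thesis unfolding polyH by simp
  qed
  moreover have "\<not> int p dvd (\<Prod>j<L. int j - int L)"
  proof
    assume "int p dvd (\<Prod>j<L. int j - int L)"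
    then have "\<exists>j\<in>{..<L}. int p dvd int j - int L"
      by (simp add: prime_dvd_prod_iff[OF _ ip])
    then obtain j where j: "j < L" "int p dvd int j - int L" by blast
    then have "int p dvd int L - int j" by (simp add: dvd_diff_commute)
    then have "int p dvd int (L - j)" using j by (simp add: of_nat_diff)
    then have "p dvd L - j" by simp
    then have "p \<le> L - j" using j by (auto dest: dvd_imp_le)
    then show False using L1 by linarith
  qed
  ultimately show False by simp
qed

end
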